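(* Let $(A,\circ,-)$ be a minus-algebra, let $a,b\in A$ with $a\not\le b$, and let $F$ be a maximally $(a,b)$-separating filter of $(A,\circ)$. Then $F$ is prime: whenever $x\in F$ and $y\in A$, either $y\in F$ or $x-y\in F$.
   Context: A minus-algebra $(A,\circ,-)$ satisfies: $x\circ y=y-(y-x)$; $(A,\circ)$ is a right normal band (semigroup with $x\circ x=x$, $(x\circ y)\circ z=(y\circ x)\circ z$); there is an element $0$ with $x-x=0$ for all $x$; $x\circ0=0\circ x=0$; $(x-y)\circ x=x-y$; $(x-y)\circ y=0$; $(x-y)\circ z=(x\circ z)-y$; and $s-x=t-x\ \&\ x\circ s=x\circ t\Rightarrow s=t$. On $(A,\circ)$: $f\lesssim g$ iff $g\circ f=f$; $f\le g$ iff $f=f\circ g$. A filter is a non-empty $F\subseteq A$ closed under $\circ$ with $a\in F$, $a\lesssim b\Rightarrow b\in F$. For $a\not\le b$, a filter $F$ is $(a,b)$-separating if $a\in F$ and there is no $e\in F$ with $e\circ a=e\circ b$; it is maximally $(a,b)$-separating if it is maximal under inclusion among $(a,b)$-separating filters. *)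

theory Defs
  imports Main
begin

text \<open>A minus-algebra on the whole type 'a, with composition c (x o y = c x y),
 minus m (x - y = m x y) and distinguished element z (the 0).\<close>
definition minus_algebra :: "('a \<Rightarrow> 'a \<Rightarrow> 'a) \<Rightarrow> ('a \<Rightarrow> 'a \<Rightarrow> 'a) \<Rightarrow> 'a \<Rightarrow> bool" where
  "minus_algebra c m z \<longleftrightarrow>
     (\<forall>x y. c x y = m y (m y x)) \<and>
     (\<forall>x y w. c (c x y) w = c x (c y w)) \<and>
     (\<forall>x. c x x = x) \<and>
     (\<forall>x y w. c (c x y) w = c (c y x) w) \<and>
     (\<forall>x. m x x = z) \<and>
     (\<forall>x. c x z = z \<and> c z x = z) \<and>
     (\<forall>x y. c (m x y) x = m x y) \<and>
     (\<forall>x y. c (m x y) y = z) \<and>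
     (\<forall>x y w. c (m x y) w = m (c x w) y) \<and>
     (\<forall>s t x. m s x = m t x \<and> c x s = c x t \<longrightarrow> s = t)"

definition preleq :: "('a \<Rightarrow> 'a \<Rightarrow> 'a) \<Rightarrow> 'a \<Rightarrow> 'a \<Rightarrow> bool" where
  "preleq c f g \<longleftrightarrow> c g f = f"

definition leqc :: "('a \<Rightarrow> 'a \<Rightarrow> 'a) \<Rightarrow> 'a \<Rightarrow> 'a \<Rightarrow> bool" where
  "leqc c f g \<longleftrightarrow> f = c f g"

definition is_filter :: "('a \<Rightarrow> 'a \<Rightarrow> 'a) \<Rightarrow> 'a set \<Rightarrow> bool" where
  "is_filter c F \<longleftrightarrow> F \<noteq> {} \<and> (\<forall>x\<in>F. \<forall>y\<in>F. c x y \<in> F) \<and>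
     (\<forall>x y. x \<in> F \<and> preleq c x y \<longrightarrow> y \<in> F)"

definition separating :: "('a \<Rightarrow> 'a \<Rightarrow> 'a) \<Rightarrow> 'a \<Rightarrow> 'a \<Rightarrow> 'a set \<Rightarrow> bool" where
  "separating c a b F \<longleftrightarrow> is_filter c F \<and> a \<in> F \<and> \<not> (\<exists>e\<in>F. c e a = c e b)"

definition max_separating :: "('a \<Rightarrow> 'a \<Rightarrow> 'a) \<Rightarrow> 'a \<Rightarrow> 'a \<Rightarrow> 'a set \<Rightarrow> bool" where
  "max_separating c a b F \<longleftrightarrow> separating c a b F \<and>
     (\<forall>G. separating c a b G \<and> F \<subseteq> G \<longrightarrow> G = F)"

end

theory Submission
  imports Defs
begin

lemma lem_main:
  fixes c m :: "'a \<Rightarrow> 'a \<Rightarrow> 'a" and z a b :: 'a and F :: "'a set"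
  assumes MA: "minus_algebra c m z"
    and MS: "max_separating c a b F"
  shows "\<forall>x\<in>F. \<forall>y. y \<in> F \<or> m x y \<in> F"
proof -
  have D: "(\<forall>x y w. c (c x y) w = c x (c y w)) \<and> (\<forall>x. c x x = x) \<and> (\<forall>x y w. c (c x y) w = c (c y x) w) \<and> (\<forall>x y w. c (m x y) w = m (c x w) y) \<and> (\<forall>s t x. m s x = m t x \<and> c x s = c x t \<longrightarrow> s = t)"
    using MA unfolding minus_algebra_def by blast
  have as: "\<And>x y w. c (c x y) w = c x (c y w)" using D by blast
  have idm: "\<And>x. c x x = x" using D by blast
  have rn: "\<And>x y w. c (c x y) w = c (c y x) w" using D by blast
  have mxz: "\<And>x y w. c (m x y) w = m (c x w) y" using D by blast
  have canc: "\<And>s t x. m s x = m t x \<Longrightarrow> c x s = c x t \<Longrightarrow> s = t" using D by blast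
  have lc: "\<And>x y w. c x (c y w) = c y (c x w)" using as rn by metis
  have sepF: "separating c a b F" and maxF: "\<And>G. separating c a b G \<Longrightarrow> F \<subseteq> G \<Longrightarrow> G = F"
    using MS unfolding max_separating_def by blast+
  have filF: "is_filter c F" and aF: "a \<in> F" and nsF: "\<And>e. e \<in> F \<Longrightarrow> c e a \<noteq> c e b"
    using sepF unfolding separating_def by blast+
  have Fc: "\<And>x y. x \<in> F \<Longrightarrow> y \<in> F \<Longrightarrow> c x y \<in> F"
    using filF unfolding is_filter_def by blast
  have gen: "\<exists>f\<in>F. c (c f u) a = c (c f u) b" if uF: "u \<notin> F" for u
  proof -
    define G where "G = {w. \<exists>f\<in>F. c w (c f u) = c f u}"
    have FG: "F \<subseteq> G"
    proof
      fix f assume "f \<in> F"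
      moreover have "c f (c f u) = c f u" using as idm by metis
      ultimately show "f \<in> G" unfolding G_def by blast
    qed
    have uG: "u \<in> G"
    proof -
      obtain f where "f \<in> F" using filF unfolding is_filter_def by blast
      moreover have "c u (c f u) = c f u" using lc as idm by metis
      ultimately show ?thesis unfolding G_def by blast
    qed
    have "is_filter c G"
      unfolding is_filter_def
    proof (intro conjI allI ballI impI)
      show "G \<noteq> {}" using uG by blast
    next
      fix w1 w2 assume "w1 \<in> G" "w2 \<in> G"
      then obtain f1 f2 where f1: "f1 \<in> F" "c w1 (c f1 u) = c f1 u"
        and f2: "f2 \<in> F" "c w2 (c f2 u) = c f2 u" unfolding G_def by blast
      have "c w2 (c (c f1 f2) u) = c (c f1 f2) u" using f2 as lc by metis
      moreover have "c w1 (c (c f1 f2) u) = c (c f1 f2) u" using f1 as lc by metis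
      ultimately have "c (c w1 w2) (c (c f1 f2) u) = c (c f1 f2) u" using as by metis
      thus "c w1 w2 \<in> G" unfolding G_def using Fc f1 f2 by blast
    next
      fix x y assume "x \<in> G \<and> preleq c x y"
      then obtain f where f: "f \<in> F" "c x (c f u) = c f u" and "c y x = x"
        unfolding G_def preleq_def by blast
      hence "c y (c f u) = c f u" using as by metis
      thus "y \<in> G" unfolding G_def using f by blast
    qed
    hence "\<not> separating c a b G" using maxF FG uG uF by blast
    then obtain e where "e \<in> G" "c e a = c e b" using \<open>is_filter c G\<close> FG aF
      unfolding separating_def by blast
    then obtain f where f: "f \<in> F" "c e (c f u) = c f u" "c e a = c e b" unfolding G_def by blast
    have "c (c f u) a = c (c f u) (c e a)" using f(2) rn as by metis
    also have "\<dots> = c (c f u) b" using f(2,3) rn as by metis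
    finally show ?thesis using f(1) by blast
  qed
  show ?thesis
  proof (intro ballI allI)
    fix x y assume xF: "x \<in> F"
    show "y \<in> F \<or> m x y \<in> F"
    proof (rule ccontr)
      assume "\<not> (y \<in> F \<or> m x y \<in> F)"
      then obtain f1 f2 where f1: "f1 \<in> F" "c (c f1 y) a = c (c f1 y) b"
        and f2: "f2 \<in> F" "c (c f2 (m x y)) a = c (c f2 (m x y)) b"
        using gen by meson
      define g where "g = c f1 f2"
      define f where "f = c g x"
      have fF: "f \<in> F" unfolding f_def g_def using Fc f1 f2 xF by blast
      have e1: "c y (c f a) = c y (c f b)"
      proof -
        have "c y (c f a) = c f2 (c x (c f1 (c y a)))" unfolding f_def g_def using as lc by metis
        also have "\<dots> = c f2 (c x (c f1 (c y b)))" using f1(2) as by metis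
        also have "\<dots> = c y (c f b)" unfolding f_def g_def using as lc by metis
        finally show ?thesis .
      qed
      have e2: "m (c f a) y = m (c f b) y"
      proof -
        have "m (c f a) y = m (c x (c g a)) y" unfolding f_def using as lc by metis
        also have "\<dots> = c (m x y) (c g a)" using mxz by metis
        also have "\<dots> = c f1 (c f2 (c (m x y) a))" unfolding g_def using as lc by metis
        also have "\<dots> = c f1 (c f2 (c (m x y) b))" using f2(2) as by metis
        also have "\<dots> = c (m x y) (c g b)" unfolding g_def using as lc by metis
        also have "\<dots> = m (c x (c g b)) y" using mxz by metis
        also have "\<dots> = m (c f b) y" unfolding f_def using as lc by metis
        finally show ?thesis .
      qed
      have "c f a = c f b" using canc[OF e2 e1] .
      thus False using nsF fF by blast
    qed
  qed
qed

theorem lemma3p11: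
  fixes c m :: "'a \<Rightarrow> 'a \<Rightarrow> 'a" and z a b :: 'a and F :: "'a set"
  assumes "minus_algebra c m z"
    and "\<not> leqc c a b"
    and "max_separating c a b F"
  shows "\<forall>x\<in>F. \<forall>y. y \<in> F \<or> m x y \<in> F"
  using lem_main[OF assms(1,3)] .

end
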